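(* Let $P$ be a nonzero $n\times n$ real symmetric positive semidefinite matrix and let $\theta$ satisfy $0<\theta<\lambda_1(P)^{-1}$. Then: (1) the function $\vartheta\mapsto\gamma(\vartheta,P)$ is monotone increasing on $[0,\lambda_1(P)^{-1})$; (2) $\gamma(\theta,P)>0$; (3) if $Q$ is a symmetric positive semidefinite matrix with $P\succeq Q$, then $\gamma(\theta,P)\ge\gamma(\theta,Q)$.
   Context: $\lambda_1(P)$ is the largest eigenvalue of $P$; $\succeq$ is the Loewner order. For a symmetric matrix $P$ and real $\theta$ with $I-\theta P\succ0$, $\gamma(\theta,P)=\tfrac12\big[\log\det(I-\theta P)+\mathrm{tr}((I-\theta P)^{-1})-n\big]$. *)

theory Defs
  imports "HOL-Analysis.Analysis"
begin

definition sym_matrix :: "real^'n^'n \<Rightarrow> bool" where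
  "sym_matrix A \<longleftrightarrow> transpose A = A"

definition psd :: "real^'n^'n \<Rightarrow> bool" where
  "psd A \<longleftrightarrow> (\<forall>x. 0 \<le> x \<bullet> (A *v x))"

definition pd :: "real^'n^'n \<Rightarrow> bool" where
  "pd A \<longleftrightarrow> (\<forall>x. x \<noteq> 0 \<longrightarrow> 0 < x \<bullet> (A *v x))"

definition loewner_ge :: "real^'n^'n \<Rightarrow> real^'n^'n \<Rightarrow> bool" where
  "loewner_ge P Q \<longleftrightarrow> psd (P - Q)"

definition lambda_max :: "real^'n^'n \<Rightarrow> real" where
  "lambda_max A = Max {c. \<exists>v. v \<noteq> 0 \<and> A *v v = c *\<^sub>R v}"

definition gamma :: "real \<Rightarrow> real^'n^'n \<Rightarrow> real" where
  "gamma \<theta> P = (let M = mat 1 - \<theta> *\<^sub>R P in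
     (ln (det M) + trace (matrix_inv M) - real CARD('n)) / 2)"

end

theory Submission imports Defs begin

lemma sym_inner:
  fixes A :: "real^'n^'n"
  assumes "transpose A = A"
  shows "x \<bullet> (A *v y) = (A *v x) \<bullet> y"
proof -
  have "(A *v x) = x v* transpose A"
    by (simp add: vector_matrix_mult_def matrix_vector_mult_def transpose_def vec_eq_iff mult.commute)
  then show ?thesis using assms by (simp add: dot_lmul_matrix)
qed

lemma quad_zero:
  fixes b c :: real
  assumes "\<And>t. 2*t*b + t^2*c \<le> 0"
  shows "b = 0"
proof -
  define s where "s = 1/(\<bar>c\<bar>+1)"
  have s: "s > 0" "s * \<bar>c\<bar> < 1" unfolding s_def by (auto simp: field_simps)
  have "2*(s*b)*b + (s*b)^2*c \<le> 0" by (rule assms)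
  hence "s*b^2*(2 + s*c) \<le> 0" by (simp add: power2_eq_square algebra_simps)
  moreover have "2 + s*c > 0"
  proof -
    have "s * (-\<bar>c\<bar>) \<le> s * c" by (rule mult_left_mono) (use s in auto)
    thus ?thesis using s by simp
  qed
  ultimately have "b^2 \<le> 0" using s by (simp add: mult_le_0_iff zero_less_mult_iff)
  thus ?thesis by simp
qed

lemma eig_exists:
  fixes A :: "real^'n^'n"
  assumes sym: "transpose A = A" and S: "subspace S" "S \<noteq> {0}"
    and inv: "\<And>x. x \<in> S \<Longrightarrow> A *v x \<in> S"
  shows "\<exists>u\<in>S. norm u = 1 \<and> A *v u = (u \<bullet> (A *v u)) *\<^sub>R u"
proof -
  let ?q = "\<lambda>x. x \<bullet> (A *v x)"
  let ?K = "S \<inter> sphere 0 1"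
  have cK: "compact ?K" using S by (simp add: closed_Int_compact closed_subspace)
  obtain x where x: "x \<in> S" "x \<noteq> 0" using S subspace_0 by blast
  have "x /\<^sub>R norm x \<in> ?K" using x S by (auto simp: subspace_mul)
  hence neK: "?K \<noteq> {}" by blast
  have "continuous_on ?K ?q"
    by (intro continuous_intros linear_continuous_on matrix_vector_mul_bounded_linear)
  from continuous_attains_sup[OF cK neK this] obtain u where u: "u \<in> ?K" "\<And>y. y \<in> ?K \<Longrightarrow> ?q y \<le> ?q u"
    by blast
  define l where "l = ?q u"
  have uS: "u \<in> S" and nu: "norm u = 1" using u by auto
  have bound: "?q y \<le> l * (y \<bullet> y)" if "y \<in> S" for y
  proof (cases "y = 0")
    case True thus ?thesis by simp
  next
    case False
    have "y /\<^sub>R norm y \<in> ?K" using that False S by (auto simp: subspace_mul)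
    hence "?q (y /\<^sub>R norm y) \<le> l" using u(2) l_def by blast
    hence "inverse (norm y) * (inverse (norm y) * ?q y) \<le> l" by (simp add: matrix_vector_mult_scaleR)
    hence "?q y \<le> l * (norm y * norm y)" using False by (simp add: field_simps)
    thus ?thesis by (simp add: dot_square_norm power2_eq_square)
  qed
  have key: "w \<bullet> (A *v u - l *\<^sub>R u) = 0" if w: "w \<in> S" for w
  proof (rule quad_zero[where c = "?q w - l * (w \<bullet> w)"])
    fix t :: real
    have "u + t *\<^sub>R w \<in> S" using uS w S by (simp add: subspace_add subspace_mul)
    from bound[OF this]
    have "(u + t *\<^sub>R w) \<bullet> (A *v (u + t *\<^sub>R w)) \<le> l * ((u + t *\<^sub>R w) \<bullet> (u + t *\<^sub>R w))" .
    moreover have "u \<bullet> (A *v w) = w \<bullet> (A *v u)" using sym_inner[OF sym, of u w] by (simp add: inner_commute)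
    moreover have "u \<bullet> u = 1" using nu by (simp add: norm_eq_1)
    ultimately have "?q u + 2*t*(w \<bullet> (A *v u)) + t^2 * ?q w \<le> l * (1 + 2*t*(w \<bullet> u) + t^2*(w \<bullet> w))"
      by (simp add: matrix_vector_right_distrib matrix_vector_mult_scaleR inner_add_left inner_add_right
          power2_eq_square inner_commute[of u w]) (simp add: algebra_simps)
    hence "2*t*(w \<bullet> (A *v u)) - 2*t*l*(w \<bullet> u) + t^2 * (?q w - l*(w \<bullet> w)) \<le> 0"
      unfolding l_def by (simp add: algebra_simps)
    moreover have "w \<bullet> (A *v u - l *\<^sub>R u) = w \<bullet> (A *v u) - l*(w \<bullet> u)" by (simp add: inner_diff_right)
    ultimately show "2*t*(w \<bullet> (A *v u - l *\<^sub>R u)) + t^2*(?q w - l * (w \<bullet> w)) \<le> 0"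
      by (simp add: right_diff_distrib)
  qed
  have "A *v u - l *\<^sub>R u \<in> S" using inv[OF uS] uS S by (simp add: subspace_diff subspace_mul)
  from key[OF this] have "A *v u = l *\<^sub>R u" by simp
  thus ?thesis using uS nu l_def by blast
qed

lemma spectral_subspace:
  fixes A :: "real^'n^'n"
  assumes sym: "transpose A = A"
  shows "subspace S \<Longrightarrow> (\<forall>x\<in>S. A *v x \<in> S) \<Longrightarrow> \<exists>B. B \<subseteq> S \<and> pairwise orthogonal B \<and>
     (\<forall>b\<in>B. norm b = 1 \<and> A *v b = (b \<bullet> (A *v b)) *\<^sub>R b) \<and> span B = S"
proof (induction "dim S" arbitrary: S rule: less_induct)
  case less
  show ?case
  proof (cases "S = {0}")
    case True
    thus ?thesis by (intro exI[of _ "{}"]) auto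
  next
    case False
    obtain u where u: "u \<in> S" "norm u = 1" "A *v u = (u \<bullet> (A *v u)) *\<^sub>R u"
      using eig_exists[OF sym less.prems(1) False] less.prems(2) by blast
    define S' where "S' = S \<inter> {x. u \<bullet> x = 0}"
    have sS': "subspace S'" unfolding S'_def using less.prems(1) by (intro subspace_inter subspace_hyperplane)
    have iS': "\<forall>x\<in>S'. A *v x \<in> S'"
    proof
      fix x assume x: "x \<in> S'"
      have "u \<bullet> (A *v x) = (A *v u) \<bullet> x" by (rule sym_inner[OF sym])
      also have "\<dots> = 0" using x u(3) unfolding S'_def by (metis (mono_tags) inner_scaleR_left mem_Collect_eq mult_zero_right IntD2)
      finally show "A *v x \<in> S'" using x less.prems(2) unfolding S'_def by auto
    qed
    have uu: "u \<bullet> u = 1" using u(2) by (simp add: norm_eq_1)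
    have "u \<notin> S'" using uu unfolding S'_def by auto
    hence "S' \<subset> S" using u(1) unfolding S'_def by blast
    hence "span S' \<subset> span S" using sS' less.prems(1) by (metis span_eq_iff)
    hence "dim S' < dim S" by (rule dim_psubset)
    from less.hyps[OF this sS' iS'] obtain B' where B': "B' \<subseteq> S'" "pairwise orthogonal B'"
      "\<forall>b\<in>B'. norm b = 1 \<and> A *v b = (b \<bullet> (A *v b)) *\<^sub>R b" "span B' = S'" by blast
    have uB': "u \<notin> B'" using B'(1) uu unfolding S'_def by auto
    show ?thesis
    proof (intro exI[of _ "insert u B'"] conjI)
      show "insert u B' \<subseteq> S" using u B'(1) unfolding S'_def by auto
      show "pairwise orthogonal (insert u B')"
        using B'(1,2) uB' unfolding S'_def pairwise_insert
        by (auto simp: orthogonal_def inner_commute)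
      show "\<forall>b\<in>insert u B'. norm b = 1 \<and> A *v b = (b \<bullet> (A *v b)) *\<^sub>R b" using u B'(3) by auto
      show "span (insert u B') = S"
      proof
        show "span (insert u B') \<subseteq> S" using u B'(1) less.prems(1) unfolding S'_def
          by (intro span_minimal) auto
        show "S \<subseteq> span (insert u B')"
        proof
          fix x assume x: "x \<in> S"
          have "x - (u \<bullet> x) *\<^sub>R u \<in> S'" unfolding S'_def using x u(1) less.prems(1) uu
            by (auto simp: subspace_diff subspace_mul inner_diff_right)
          hence "x - (u \<bullet> x) *\<^sub>R u \<in> span (insert u B')" using B'(4) span_mono[of B' "insert u B'"] by auto
          moreover have "(u \<bullet> x) *\<^sub>R u \<in> span (insert u B')" by (simp add: span_base span_mul)
          ultimately have "(x - (u \<bullet> x) *\<^sub>R u) + (u \<bullet> x) *\<^sub>R u \<in> span (insert u B')" by (rule span_add)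
          thus "x \<in> span (insert u B')" by simp
        qed
      qed
    qed
  qed
qed

lemma dim_UNIV_cart: "dim (UNIV :: (real^'n) set) = CARD('n)"
  by (metis dim_vec_eq vec_dim_card)

lemma spectral:
  fixes A :: "real^'n^'n"
  assumes sym: "transpose A = A"
  obtains v :: "'n \<Rightarrow> real^'n" where "\<And>i j. v i \<bullet> v j = (if i = j then 1 else 0)"
    "\<And>i. A *v v i = (v i \<bullet> (A *v v i)) *\<^sub>R v i"
proof -
  obtain B where B: "pairwise orthogonal B"
     "\<forall>b\<in>B. norm b = 1 \<and> A *v b = (b \<bullet> (A *v b)) *\<^sub>R b" "span B = UNIV"
    using spectral_subspace[OF sym, of UNIV] by auto
  have "0 \<notin> B" using B(2) by force
  hence ind: "independent B" using B(1) pairwise_orthogonal_independent by blast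
  hence "finite B" "card B = CARD('n)" using indep_card_eq_dim_span[OF ind] B(3) dim_UNIV_cart by auto
  then obtain h where h: "bij_betw h (UNIV::'n set) B"
    using finite_same_card_bij[of "UNIV::'n set" B] by auto
  show ?thesis
  proof
    fix i j
    show "h i \<bullet> h j = (if i = j then 1 else 0)"
    proof (cases "i = j")
      case True
      have "h i \<in> B" using h by (auto simp: bij_betw_def)
      thus ?thesis using True B(2) by (simp add: norm_eq_1)
    next
      case False
      hence "h i \<noteq> h j" using h by (auto simp: bij_betw_def inj_on_def)
      moreover have "h i \<in> B" "h j \<in> B" using h by (auto simp: bij_betw_def)
      ultimately show ?thesis using False B(1) by (auto simp: pairwise_def orthogonal_def)
    qed
  next
    fix i
    have "h i \<in> B" using h by (auto simp: bij_betw_def)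
    thus "A *v h i = (h i \<bullet> (A *v h i)) *\<^sub>R h i" using B(2) by auto
  qed
qed

definition diagm :: "('n \<Rightarrow> real) \<Rightarrow> real^'n^'n" where
  "diagm e = (\<chi> i j. if i = j then e i else 0)"

definition colm :: "('n \<Rightarrow> real^'n) \<Rightarrow> real^'n^'n" where
  "colm v = (\<chi> i j. v j $ i)"

definition ff :: "real \<Rightarrow> real" where
  "ff x = ln (1 - x) + 1 / (1 - x) - 1"

lemma diagm_mult: fixes a b :: "'n::finite \<Rightarrow> real" shows "diagm a ** diagm b = diagm (\<lambda>i. a i * b i)"
proof -
  have "(\<Sum>k\<in>UNIV. (if i = k then a i else 0) * (if k = j then b k else 0)) = (if i = j then a i * b i else 0)"
    for i j :: 'n
  proof -
    have "(\<Sum>k\<in>UNIV. (if i = k then a i else 0) * (if k = j then b k else 0))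
       = (\<Sum>k\<in>UNIV. if k = i then (if i = j then a i * b i else 0) else 0)"
      by (rule sum.cong) auto
    thus ?thesis by simp
  qed
  thus ?thesis by (simp add: diagm_def matrix_matrix_mult_def vec_eq_iff)
qed

lemma det_diagm: "det (diagm e) = prod e UNIV"
  by (subst det_diagonal) (auto simp: diagm_def)

lemma trace_diagm: "trace (diagm e) = sum e UNIV"
  by (simp add: trace_def diagm_def)

lemma colm_orth:
  fixes v :: "'n \<Rightarrow> real^'n"
  assumes "\<And>i j. v i \<bullet> v j = (if i = j then 1 else 0)"
  shows "transpose (colm v) ** colm v = mat 1" "colm v ** transpose (colm v) = mat 1"
proof -
  show 1: "transpose (colm v) ** colm v = mat 1"
    using assms by (simp add: colm_def matrix_matrix_mult_def transpose_def vec_eq_iff mat_def inner_vec_def)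
  thus "colm v ** transpose (colm v) = mat 1"
    using orthogonal_matrix orthogonal_matrix_def by blast
qed

lemma diag_repr:
  fixes M :: "real^'n^'n" and v :: "'n \<Rightarrow> real^'n"
  assumes orth: "\<And>i j. v i \<bullet> v j = (if i = j then 1 else 0)"
    and ev: "\<And>k. M *v v k = e k *\<^sub>R v k"
  shows "M = colm v ** diagm e ** transpose (colm v)"
proof -
  have "M ** colm v = colm v ** diagm e"
  proof -
    have "(M ** colm v) $ i $ k = (colm v ** diagm e) $ i $ k" for i k
    proof -
      have "(M ** colm v) $ i $ k = (M *v v k) $ i"
        by (simp add: matrix_matrix_mult_def matrix_vector_mult_def colm_def)
      also have "\<dots> = e k * v k $ i" using ev by simp
      also have "\<dots> = (colm v ** diagm e) $ i $ k"
        by (simp add: matrix_matrix_mult_def diagm_def colm_def if_distrib cong: if_cong)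
      finally show ?thesis .
    qed
    thus ?thesis by (simp add: vec_eq_iff)
  qed
  hence "M ** colm v ** transpose (colm v) = colm v ** diagm e ** transpose (colm v)" by simp
  thus ?thesis using colm_orth[OF orth] by (metis matrix_mul_rid matrix_mul_assoc)
qed

lemma matrix_inv_eq:
  fixes A N :: "real^'n^'n"
  assumes "A ** N = mat 1" "N ** A = mat 1"
  shows "matrix_inv A = N"
  unfolding matrix_inv_def
proof (rule some_equality)
  show "A ** N = mat 1 \<and> N ** A = mat 1" using assms by simp
next
  fix N' assume "A ** N' = mat 1 \<and> N' ** A = mat 1"
  hence "N' = N' ** (A ** N)" "N' ** A = mat 1" using assms by auto
  thus "N' = N" by (simp add: matrix_mul_assoc)
qed

lemma scaleR_mv: fixes A :: "real^'m^'n" shows "((t::real) *\<^sub>R A) *v x = t *\<^sub>R (A *v x)"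
  by (rule scaleR_matrix_vector_assoc[symmetric])

lemma gamma_eig:
  fixes A :: "real^'n^'n" and v :: "'n \<Rightarrow> real^'n"
  assumes orth: "\<And>i j. v i \<bullet> v j = (if i = j then 1 else 0)"
    and ev: "\<And>k. A *v v k = d k *\<^sub>R v k"
    and lt: "\<And>k. t * d k < 1"
  shows "gamma t A = (\<Sum>k\<in>UNIV. ff (t * d k)) / 2"
proof -
  define M where "M = mat 1 - t *\<^sub>R A"
  define U where "U = colm v"
  define e where "e k = 1 - t * d k" for k
  have epos: "e k > 0" for k using lt[of k] by (simp add: e_def)
  have "M *v v k = e k *\<^sub>R v k" for k
    by (simp add: M_def e_def matrix_vector_mult_diff_rdistrib scaleR_mv ev algebra_simps)
  hence M: "M = U ** diagm e ** transpose U" unfolding U_def by (rule diag_repr[OF orth])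
  have U1: "transpose U ** U = mat 1" "U ** transpose U = mat 1" unfolding U_def using colm_orth[OF orth] by auto
  have dU: "det U * det U = 1" using U1(1) by (metis det_I det_mul det_transpose)
  have detM: "det M = prod e UNIV"
    using dU by (simp add: M det_mul det_diagm)
  define N where "N = U ** diagm (\<lambda>k. inverse (e k)) ** transpose U"
  have d1: "diagm e ** diagm (\<lambda>k. inverse (e k)) = mat 1" "diagm (\<lambda>k. inverse (e k)) ** diagm e = mat 1"
  proof -
    have ne: "e k \<noteq> 0" for k using epos[of k] by simp
    have "diagm (\<lambda>k::'n. 1) = mat 1" by (simp add: diagm_def mat_def vec_eq_iff)
    thus "diagm e ** diagm (\<lambda>k. inverse (e k)) = mat 1" "diagm (\<lambda>k. inverse (e k)) ** diagm e = mat 1"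
      by (simp_all add: diagm_mult ne)
  qed
  have "M ** N = mat 1"
  proof -
    have "M ** N = U ** diagm e ** (transpose U ** U) ** diagm (\<lambda>k. inverse (e k)) ** transpose U"
      by (simp add: M N_def matrix_mul_assoc)
    also have "\<dots> = U ** (diagm e ** diagm (\<lambda>k. inverse (e k))) ** transpose U" using U1 by (simp add: matrix_mul_assoc)
    also have "\<dots> = U ** transpose U" using d1 by simp
    finally show ?thesis using U1 by simp
  qed
  moreover have "N ** M = mat 1"
  proof -
    have "N ** M = U ** diagm (\<lambda>k. inverse (e k)) ** (transpose U ** U) ** diagm e ** transpose U"
      by (simp add: M N_def matrix_mul_assoc)
    also have "\<dots> = U ** (diagm (\<lambda>k. inverse (e k)) ** diagm e) ** transpose U" using U1 by (simp add: matrix_mul_assoc)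
    also have "\<dots> = U ** transpose U" using d1 by simp
    finally show ?thesis using U1 by simp
  qed
  ultimately have inv: "matrix_inv M = N" by (rule matrix_inv_eq)
  have trN: "trace N = (\<Sum>k\<in>UNIV. inverse (e k))"
  proof -
    have "trace N = trace (U ** (diagm (\<lambda>k. inverse (e k)) ** transpose U))"
      unfolding N_def by (simp add: matrix_mul_assoc)
    also have "\<dots> = trace ((diagm (\<lambda>k. inverse (e k)) ** transpose U) ** U)" by (rule trace_mul_sym)
    also have "\<dots> = trace (diagm (\<lambda>k. inverse (e k)) ** (transpose U ** U))" by (simp add: matrix_mul_assoc)
    also have "\<dots> = trace (diagm (\<lambda>k. inverse (e k)))" using U1 by simp
    finally show ?thesis by (simp add: trace_diagm)
  qed
  have lp: "ln (prod e UNIV) = (\<Sum>k\<in>UNIV. ln (e k))" using epos by (subst ln_prod) (auto, metis epos less_irrefl)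
  have sumff: "(\<Sum>k\<in>UNIV. ff (t * d k)) = (\<Sum>k\<in>UNIV. ln (e k)) + (\<Sum>k\<in>UNIV. inverse (e k)) - real CARD('n)"
    by (simp add: ff_def e_def sum.distrib sum_subtractf inverse_eq_divide)
  show ?thesis
    unfolding gamma_def Let_def M_def[symmetric] detM inv trN lp sumff ..
qed

lemma t1: assumes "x < (1::real)" shows "((\<lambda>z. ln (1 - z)) has_real_derivative (-1/(1-x))) (at x)"
  using assms by (auto intro!: derivative_eq_intros)
lemma t2: assumes "x < (1::real)" shows "((\<lambda>z. 1 / (1 - z)) has_real_derivative (1/(1-x)^2)) (at x)"
  using assms by (auto intro!: derivative_eq_intros simp: power2_eq_square)

lemma ff_deriv: assumes "x < 1" shows "(ff has_real_derivative x / (1 - x)^2) (at x)"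
proof -
  have ne: "1 - x \<noteq> 0" using assms by simp
  have "((\<lambda>z. ln (1 - z) + 1 / (1 - z) - 1) has_real_derivative (-1/(1-x) + 1/(1-x)^2 - 0)) (at x)"
    by (intro DERIV_diff DERIV_add t1 t2 assms DERIV_const)
  moreover have "-1/(1-x) + 1/(1-x)^2 - 0 = x / (1 - x)^2"
  proof -
    have gen: "\<And>y::real. y \<noteq> 0 \<Longrightarrow> -1/y + 1/y^2 = (1-y)/y^2"
      by (simp add: field_simps power2_eq_square)
    show ?thesis using gen[OF ne] by simp
  qed
  ultimately show ?thesis unfolding ff_def[abs_def] by simp
qed

lemma ff_0: "ff 0 = 0" by (simp add: ff_def)

lemma ff_mono: assumes "0 \<le> x" "x \<le> y" "y < 1" shows "ff x \<le> ff y"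
proof (cases "x = y")
  case False
  hence "x < y" using assms by simp
  from MVT2[OF this, of ff "\<lambda>x. x / (1 - x)^2"] obtain z where z: "x < z" "z < y" "ff y - ff x = (y - x) * (z / (1 - z)^2)"
    using ff_deriv assms by fastforce
  have "(y - x) * (z / (1 - z)^2) \<ge> 0" using z assms by (intro mult_nonneg_nonneg divide_nonneg_nonneg) auto
  thus ?thesis using z by linarith
qed simp

lemma ff_pos: assumes "0 < x" "x < 1" shows "ff x > 0"
proof -
  from MVT2[OF assms(1), of ff "\<lambda>x. x / (1 - x)^2"] obtain z where z: "0 < z" "z < x" "ff x - ff 0 = (x - 0) * (z / (1 - z)^2)"
    using ff_deriv assms by fastforce
  have "(x - 0) * (z / (1 - z)^2) > 0" using z assms by (intro mult_pos_pos divide_pos_pos) auto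
  thus ?thesis using z ff_0 by linarith
qed

lemma ff_convex: "convex_on {0..<1} ff"
proof (rule convex_on_realI[where f' = "\<lambda>x. x / (1 - x)^2"])
  show "connected {0..<1::real}" by (simp add: is_interval_connected)
  show "\<And>x. x \<in> {0..<1} \<Longrightarrow> (ff has_real_derivative x / (1 - x)\<^sup>2) (at x)" using ff_deriv by auto
  fix x y :: real assume "x \<in> {0..<1}" "y \<in> {0..<1}" "x \<le> y"
  thus "x / (1 - x)\<^sup>2 \<le> y / (1 - y)\<^sup>2"
    by (intro frac_le) (auto intro!: power_mono)
qed

lemma diagm_mv: "(diagm d *v z) $ i = d i * z $ i"
proof -
  have "(diagm d *v z) $ i = (\<Sum>j\<in>UNIV. (if i = j then d i else 0) * z $ j)"
    unfolding diagm_def matrix_vector_mult_def by simp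
  also have "\<dots> = (\<Sum>j\<in>UNIV. if i = j then d i * z $ j else 0)" by (rule sum.cong) auto
  finally show ?thesis by simp
qed

lemma inner_mv_transpose: "(x::real^'n) \<bullet> (A *v y) = (transpose A *v x) \<bullet> y"
  by (simp add: dot_lmul_matrix)

lemma colm_tmv: "(transpose (colm v) *v x) $ i = v i \<bullet> x"
  by (simp add: colm_def matrix_vector_mult_def transpose_def inner_vec_def)

lemma coef_sum:
  fixes v :: "'n \<Rightarrow> real^'n"
  assumes orth: "\<And>i j. v i \<bullet> v j = (if i = j then 1 else 0)"
  shows "(\<Sum>i\<in>UNIV. (v i \<bullet> x)^2) = x \<bullet> x"
proof -
  define U where "U = colm v"
  define z where "z = transpose U *v x"
  have U1: "transpose U ** U = mat 1" "U ** transpose U = mat 1" unfolding U_def using colm_orth[OF orth] by auto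
  have "U *v z = x" unfolding z_def using U1 by (simp add: matrix_vector_mul_assoc del: transpose_matrix_vector)
  have "z \<bullet> z = x \<bullet> (U *v z)" unfolding z_def by (simp add: inner_mv_transpose)
  also have "\<dots> = x \<bullet> x" using \<open>U *v z = x\<close> by simp
  finally have "z \<bullet> z = x \<bullet> x" .
  moreover have "z \<bullet> z = (\<Sum>i\<in>UNIV. (v i \<bullet> x)^2)"
    unfolding inner_vec_def z_def U_def colm_tmv by (simp add: power2_eq_square)
  ultimately show ?thesis by simp
qed

lemma quad_form:
  fixes v :: "'n \<Rightarrow> real^'n" and P :: "real^'n^'n"
  assumes orth: "\<And>i j. v i \<bullet> v j = (if i = j then 1 else 0)"
    and ev: "\<And>k. P *v v k = d k *\<^sub>R v k"
  shows "x \<bullet> (P *v x) = (\<Sum>i\<in>UNIV. d i * (v i \<bullet> x)^2)"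
proof -
  define U where "U = colm v"
  define z where "z = transpose U *v x"
  have P: "P = U ** diagm d ** transpose U" unfolding U_def by (rule diag_repr[OF orth ev])
  have "P *v x = U *v (diagm d *v z)" unfolding P z_def by (simp add: matrix_vector_mul_assoc matrix_mul_assoc del: transpose_matrix_vector)
  hence "x \<bullet> (P *v x) = z \<bullet> (diagm d *v z)" unfolding z_def by (simp add: inner_mv_transpose)
  also have "\<dots> = (\<Sum>i\<in>UNIV. d i * (v i \<bullet> x)^2)"
    unfolding inner_vec_def diagm_mv z_def U_def colm_tmv by (simp add: power2_eq_square mult_ac)
  finally show ?thesis .
qed

lemma eig_set:
  fixes v :: "'n \<Rightarrow> real^'n" and P :: "real^'n^'n"
  assumes orth: "\<And>i j. v i \<bullet> v j = (if i = j then 1 else 0)"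
    and ev: "\<And>k. P *v v k = d k *\<^sub>R v k"
  shows "{c. \<exists>w. w \<noteq> 0 \<and> P *v w = c *\<^sub>R w} = range d"
proof
  show "range d \<subseteq> {c. \<exists>w. w \<noteq> 0 \<and> P *v w = c *\<^sub>R w}"
  proof
    fix c assume "c \<in> range d"
    then obtain i where "c = d i" by auto
    moreover have "v i \<noteq> 0" using orth[of i i] by auto
    ultimately show "c \<in> {c. \<exists>w. w \<noteq> 0 \<and> P *v w = c *\<^sub>R w}" using ev by auto
  qed
next
  show "{c. \<exists>w. w \<noteq> 0 \<and> P *v w = c *\<^sub>R w} \<subseteq> range d"
  proof
    fix c assume "c \<in> {c. \<exists>w. w \<noteq> 0 \<and> P *v w = c *\<^sub>R w}"
    then obtain w where w: "w \<noteq> 0" "P *v w = c *\<^sub>R w" by auto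
    define U where "U = colm v"
    define z where "z = transpose U *v w"
    have U1: "transpose U ** U = mat 1" "U ** transpose U = mat 1" unfolding U_def using colm_orth[OF orth] by auto
    have P: "P = U ** diagm d ** transpose U" unfolding U_def by (rule diag_repr[OF orth ev])
    have "U *v z = w" unfolding z_def using U1 by (simp add: matrix_vector_mul_assoc del: transpose_matrix_vector)
    hence "z \<noteq> 0" using w by auto
    then obtain i where i: "z $ i \<noteq> 0" by (auto simp: vec_eq_iff)
    have "transpose U *v (P *v w) = (transpose U ** U) *v (diagm d *v z)"
      unfolding P z_def by (simp add: matrix_vector_mul_assoc matrix_mul_assoc del: transpose_matrix_vector)
    hence "diagm d *v z = c *\<^sub>R z" using U1 w(2) unfolding z_def by (simp add: matrix_vector_mult_scaleR)
    hence "d i * z $ i = c * z $ i" by (metis diagm_mv vector_scaleR_component real_scaleR_def)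
    hence "c = d i" using i by simp
    thus "c \<in> range d" by simp
  qed
qed

theorem proposition2:
  fixes P :: "real^'n^'n" and \<theta> :: real
  assumes "sym_matrix P" and "psd P" and "P \<noteq> 0"
    and "0 < \<theta>" and "\<theta> < inverse (lambda_max P)"
  shows "mono_on {0..<inverse (lambda_max P)} (\<lambda>t. gamma t P)
         \<and> gamma \<theta> P > 0
         \<and> (\<forall>Q :: real^'n^'n. sym_matrix Q \<and> psd Q \<and> loewner_ge P Q \<longrightarrow>
              gamma \<theta> P \<ge> gamma \<theta> Q)"
proof -
  have symP: "transpose P = P" using assms(1) by (simp add: sym_matrix_def)
  obtain v :: "'n \<Rightarrow> real^'n" where orth: "\<And>i j. v i \<bullet> v j = (if i = j then 1 else 0)"
    and ev0: "\<And>i. P *v v i = (v i \<bullet> (P *v v i)) *\<^sub>R v i" using spectral[OF symP] by metis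
  define d where "d i = v i \<bullet> (P *v v i)" for i
  have ev: "\<And>i. P *v v i = d i *\<^sub>R v i" unfolding d_def by (rule ev0)
  have dnn: "d i \<ge> 0" for i using assms(2) unfolding psd_def d_def by blast
  define L where "L = lambda_max P"
  have L: "L = Max (range d)" unfolding L_def lambda_max_def eig_set[OF orth ev] ..
  have dL: "d i \<le> L" for i unfolding L by (rule Max_ge) auto
  have "\<exists>i. d i \<noteq> 0"
  proof (rule ccontr)
    assume "\<not> (\<exists>i. d i \<noteq> 0)"
    hence "d = (\<lambda>_. 0)" by auto
    hence "P = colm v ** diagm (\<lambda>_. 0) ** transpose (colm v)" using diag_repr[OF orth ev] by simp
    moreover have "diagm (\<lambda>_::'n. 0::real) = 0" by (simp add: diagm_def vec_eq_iff)
    ultimately have "P = 0" by simp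
    with assms(3) show False ..
  qed
  then obtain i0 where "d i0 \<noteq> 0" by blast
  hence di0: "d i0 > 0" using dnn[of i0] by simp
  hence Lpos: "L > 0" using dL[of i0] by simp
  have tL: "t * L < 1" if "t < inverse L" for t using that Lpos by (simp add: field_simps)
  have trange: "0 \<le> t * d k \<and> t * d k < 1" if "0 \<le> t" "t < inverse L" for t k
  proof
    show "0 \<le> t * d k" using that dnn by simp
    have "t * d k \<le> t * L" using that dL by (simp add: mult_left_mono)
    also have "t * L < 1" using tL that by simp
    finally show "t * d k < 1" .
  qed
  have gP: "gamma t P = (\<Sum>k\<in>UNIV. ff (t * d k)) / 2" if "0 \<le> t" "t < inverse L" for t
    by (rule gamma_eig[OF orth ev]) (use trange[OF that] in blast)
  have th: "0 \<le> \<theta>" "\<theta> < inverse L" using assms(4,5) unfolding L_def by auto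
  have part1: "mono_on {0..<inverse L} (\<lambda>t. gamma t P)"
  proof (rule mono_onI)
    fix r s assume r: "r \<in> {0..<inverse L}" and s: "s \<in> {0..<inverse L}" and rs: "r \<le> s"
    have "(\<Sum>k\<in>UNIV. ff (r * d k)) \<le> (\<Sum>k\<in>UNIV. ff (s * d k))"
    proof (rule sum_mono)
      fix k
      show "ff (r * d k) \<le> ff (s * d k)"
        using trange[of r k] trange[of s k] r s rs dnn[of k] by (intro ff_mono) (auto intro: mult_right_mono)
    qed
    thus "gamma r P \<le> gamma s P" using gP[of r] gP[of s] r s by simp
  qed
  have part2: "gamma \<theta> P > 0"
  proof -
    have "0 < (\<Sum>k\<in>UNIV. ff (\<theta> * d k))"
    proof (rule sum_pos2[where i=i0])
      show "0 < ff (\<theta> * d i0)" using trange[OF th, of i0] di0 assms(4) by (intro ff_pos) auto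
      show "\<And>i. i \<in> UNIV \<Longrightarrow> 0 \<le> ff (\<theta> * d i)" using trange[OF th] ff_mono[of 0] ff_0 by fastforce
    qed auto
    thus ?thesis using gP[OF th] by simp
  qed
  have part3: "gamma \<theta> P \<ge> gamma \<theta> Q" if Q: "sym_matrix Q" "psd Q" "loewner_ge P Q" for Q :: "real^'n^'n"
  proof -
    have symQ: "transpose Q = Q" using Q(1) by (simp add: sym_matrix_def)
    obtain u :: "'n \<Rightarrow> real^'n" where orthU: "\<And>i j. u i \<bullet> u j = (if i = j then 1 else 0)"
      and evQ0: "\<And>i. Q *v u i = (u i \<bullet> (Q *v u i)) *\<^sub>R u i" using spectral[OF symQ] by metis
    define e where "e i = u i \<bullet> (Q *v u i)" for i
    have evQ: "\<And>i. Q *v u i = e i *\<^sub>R u i" unfolding e_def by (rule evQ0)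
    have enn: "e i \<ge> 0" for i using Q(2) unfolding psd_def e_def by blast
    define c where "c i j = (v i \<bullet> u j)^2" for i j
    define q where "q j = u j \<bullet> (P *v u j)" for j
    have qc: "q j = (\<Sum>i\<in>UNIV. d i * c i j)" for j unfolding q_def c_def by (rule quad_form[OF orth ev])
    have c1: "(\<Sum>i\<in>UNIV. c i j) = 1" for j unfolding c_def using coef_sum[OF orth, of "u j"] orthU[of j j] by simp
    have c2: "(\<Sum>j\<in>UNIV. c i j) = 1" for i unfolding c_def using coef_sum[OF orthU, of "v i"] orth[of i i]
      by (simp add: inner_commute)
    have cnn: "c i j \<ge> 0" for i j unfolding c_def by simp
    have eq: "e j \<le> q j" for j
    proof -
      have "0 \<le> u j \<bullet> ((P - Q) *v u j)" using Q(3) by (simp add: loewner_ge_def psd_def)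
      thus ?thesis by (simp add: q_def e_def matrix_vector_mult_diff_rdistrib inner_diff_right)
    qed
    have qL: "q j \<le> L" for j
    proof -
      have "q j \<le> (\<Sum>i\<in>UNIV. L * c i j)" unfolding qc
        by (rule sum_mono) (simp add: mult_right_mono dL cnn)
      also have "\<dots> = L" using c1 by (simp add: sum_distrib_left[symmetric])
      finally show ?thesis .
    qed
    have thL: "\<theta> * L < 1" using tL th by simp
    have erange: "0 \<le> \<theta> * e j" "\<theta> * e j \<le> \<theta> * q j" "\<theta> * q j < 1" for j
    proof -
      show "0 \<le> \<theta> * e j" using th enn by simp
      show "\<theta> * e j \<le> \<theta> * q j" using th eq by (simp add: mult_left_mono)
      have "\<theta> * q j \<le> \<theta> * L" using th qL by (simp add: mult_left_mono)
      thus "\<theta> * q j < 1" using thL by simp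
    qed
    have gQ: "gamma \<theta> Q = (\<Sum>j\<in>UNIV. ff (\<theta> * e j)) / 2"
      by (rule gamma_eig[OF orthU evQ]) (use erange in \<open>meson le_less_trans\<close>)
    have "(\<Sum>j\<in>UNIV. ff (\<theta> * e j)) \<le> (\<Sum>j\<in>UNIV. ff (\<theta> * q j))"
      by (rule sum_mono, rule ff_mono) (use erange in auto)
    also have "\<dots> \<le> (\<Sum>j\<in>UNIV. \<Sum>i\<in>UNIV. c i j * ff (\<theta> * d i))"
    proof (rule sum_mono)
      fix j
      have "ff (\<Sum>i\<in>UNIV. c i j *\<^sub>R (\<theta> * d i)) \<le> (\<Sum>i\<in>UNIV. c i j * ff (\<theta> * d i))"
        by (rule convex_on_sum[OF finite UNIV_not_empty ff_convex]) (use c1 cnn trange[OF th] in auto)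
      moreover have "(\<Sum>i\<in>UNIV. c i j *\<^sub>R (\<theta> * d i)) = \<theta> * q j"
        by (simp add: qc sum_distrib_left mult_ac)
      ultimately show "ff (\<theta> * q j) \<le> (\<Sum>i\<in>UNIV. c i j * ff (\<theta> * d i))" by simp
    qed
    also have "\<dots> = (\<Sum>i\<in>UNIV. \<Sum>j\<in>UNIV. c i j * ff (\<theta> * d i))"
      by (rule sum.swap)
    also have "\<dots> = (\<Sum>i\<in>UNIV. (\<Sum>j\<in>UNIV. c i j) * ff (\<theta> * d i))"
      by (simp add: sum_distrib_right)
    also have "\<dots> = (\<Sum>i\<in>UNIV. ff (\<theta> * d i))" using c2 by simp
    finally show ?thesis using gQ gP[OF th] by simp
  qed
  show ?thesis using part1 part2 part3 unfolding L_def by blast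
qed

end
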